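(* Let $(\mathbf{X},\mathbf{A})\sim \textsf{CSBM}(n,p,q,\boldsymbol{\mu},\sigma^2)$. Let $\Psi$ be the attention architecture $$\Psi(\mathbf{X}_i,\mathbf{X}_j)=\boldsymbol{r}^T\,\mathrm{LeakyRelu}\!\left(\mathbf{S}\begin{bmatrix}\tilde{\boldsymbol{w}}^T\mathbf{X}_i\\ \tilde{\boldsymbol{w}}^T\mathbf{X}_j\end{bmatrix}\right),\quad \tilde{\boldsymbol{w}}=\frac{\boldsymbol{\mu}}{\|\boldsymbol{\mu}\|},\quad \mathbf{S}=\begin{bmatrix}1&1\\-1&-1\\1&-1\\-1&1\end{bmatrix},\quad \boldsymbol{r}=R\begin{bmatrix}1\\1\\-1\\-1\end{bmatrix},$$ with $R=\Omega(n\log^2 n/\sigma)$, let $\gamma_{ij}=\exp(\Psi(\mathbf{X}_i,\mathbf{X}_j))/\sum_{\ell\in N_i}\exp(\Psi(\mathbf{X}_i,\mathbf{X}_\ell))$ and $h_i'=\sum_{j\in N_i}\gamma_{ij}\tilde{\boldsymbol{w}}^T\mathbf{X}_j$. Then with probability at least $1-o(1)$ over the data, for all $i\in[n]$: $h_i'>0$ if and only if $\tilde{\boldsymbol{w}}^T\mathbf{X}_i>0$, and $h_i'<0$ if and only if $\tilde{\boldsymbol{w}}^T\mathbf{X}_i<0$.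
   Context: CSBM: fix $n,d\in\mathbb{N}$, $\boldsymbol{\mu}\in\mathbb{R}^d\setminus\{0\}$, $\sigma>0$, $p,q\in[0,1]$. Draw $\epsilon_1,\dots,\epsilon_n$ i.i.d. Bernoulli$(1/2)$, classes $C_k=\{j:\epsilon_j=k\}$. Independently $\mathbf{X}_i\sim N((2\epsilon_i-1)\boldsymbol{\mu},\sigma^2\mathbf{I})$. Adjacency entries $a_{ij}\sim\mathrm{Ber}(p)$ if $i,j$ are in the same class and $\mathrm{Ber}(q)$ otherwise; $N_i$ is the set of neighbors of $i$ together with $i$ itself. $\mathrm{LeakyRelu}(x)=x$ for $x\ge0$ and $\beta x$ for $x<0$, with fixed $\beta\in[0,1)$, applied entrywise. Asymptotic notation refers to $n\to\infty$, parameters may depend on $n$. *)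

theory Defs
  imports "HOL-Probability.Probability"
begin

text \<open>Vectors in R^d are functions nat => real, only entries k < d matter.
  Feature matrix X : nat => nat => real (X i k = k-th coordinate of X_i, i < n, k < d).
  Graph: one Bernoulli variable per unordered pair {i,j}, i < j < n (undirected graph).\<close>

definition csbm_features ::
  "nat \<Rightarrow> nat \<Rightarrow> (nat \<Rightarrow> real) \<Rightarrow> real \<Rightarrow> (nat \<Rightarrow> bool) \<Rightarrow> (nat \<Rightarrow> nat \<Rightarrow> real) measure" where
  "csbm_features n d \<mu> \<sigma> \<epsilon> =
     PiM {..<n} (\<lambda>i. PiM {..<d}
       (\<lambda>k. density lborel (normal_density ((if \<epsilon> i then 1 else -1) * \<mu> k) \<sigma>)))"

definition csbm_graph ::
  "nat \<Rightarrow> real \<Rightarrow> real \<Rightarrow> (nat \<Rightarrow> bool) \<Rightarrow> (nat \<times> nat \<Rightarrow> bool) measure" where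
  "csbm_graph n p q \<epsilon> =
     PiM {(i, j). i < j \<and> j < n}
       (\<lambda>(i, j). measure_pmf (bernoulli_pmf (if \<epsilon> i = \<epsilon> j then p else q)))"

text \<open>The law of the data (X, A): the class labels eps_1..eps_n are i.i.d. Bernoulli(1/2),
  i.e. uniform on {..<n} ->E bool; conditionally on them, features and edges are independent.\<close>
definition CSBM ::
  "nat \<Rightarrow> nat \<Rightarrow> (nat \<Rightarrow> real) \<Rightarrow> real \<Rightarrow> real \<Rightarrow> real
     \<Rightarrow> ((nat \<Rightarrow> nat \<Rightarrow> real) \<times> (nat \<times> nat \<Rightarrow> bool)) measure" where
  "CSBM n d \<mu> \<sigma> p q =
     Giry_Monad.bind (measure_pmf (pmf_of_set ({..<n} \<rightarrow>\<^sub>E (UNIV :: bool set))))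
       (\<lambda>\<epsilon>. csbm_features n d \<mu> \<sigma> \<epsilon> \<Otimes>\<^sub>M csbm_graph n p q \<epsilon>)"

definition csbm_adj :: "(nat \<times> nat \<Rightarrow> bool) \<Rightarrow> nat \<Rightarrow> nat \<Rightarrow> bool" where
  "csbm_adj A i j = (i \<noteq> j \<and> (if i < j then A (i, j) else A (j, i)))"

definition nbhd :: "nat \<Rightarrow> (nat \<times> nat \<Rightarrow> bool) \<Rightarrow> nat \<Rightarrow> nat set" where
  "nbhd n A i = {j. j < n \<and> (j = i \<or> csbm_adj A i j)}"

definition leaky_relu :: "real \<Rightarrow> real \<Rightarrow> real" where
  "leaky_relu \<beta> x = (if x \<ge> 0 then x else \<beta> * x)"

definition vnorm :: "nat \<Rightarrow> (nat \<Rightarrow> real) \<Rightarrow> real" where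
  "vnorm d v = sqrt (\<Sum>k<d. (v k)\<^sup>2)"

definition w_tilde :: "nat \<Rightarrow> (nat \<Rightarrow> real) \<Rightarrow> nat \<Rightarrow> real" where
  "w_tilde d \<mu> = (\<lambda>k. \<mu> k / vnorm d \<mu>)"

definition inner_d :: "nat \<Rightarrow> (nat \<Rightarrow> real) \<Rightarrow> (nat \<Rightarrow> real) \<Rightarrow> real" where
  "inner_d d w x = (\<Sum>k<d. w k * x k)"

definition S_mat :: "nat \<Rightarrow> nat \<Rightarrow> real" where
  "S_mat m c = [[1, 1], [-1, -1], [1, -1], [-1, 1]] ! m ! c"

definition r_vec :: "real \<Rightarrow> nat \<Rightarrow> real" where
  "r_vec R m = R * [1, 1, -1, -1] ! m"

definition Psi :: "real \<Rightarrow> real \<Rightarrow> real \<Rightarrow> real \<Rightarrow> real" where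
  "Psi \<beta> R a b = (\<Sum>m<4. r_vec R m * leaky_relu \<beta> (S_mat m 0 * a + S_mat m 1 * b))"

definition gat_score ::
  "real \<Rightarrow> real \<Rightarrow> nat \<Rightarrow> (nat \<Rightarrow> real) \<Rightarrow> (nat \<Rightarrow> nat \<Rightarrow> real) \<Rightarrow> nat \<Rightarrow> nat \<Rightarrow> real" where
  "gat_score \<beta> R d \<mu> X i j =
     Psi \<beta> R (inner_d d (w_tilde d \<mu>) (X i)) (inner_d d (w_tilde d \<mu>) (X j))"

definition gat_gamma ::
  "real \<Rightarrow> real \<Rightarrow> nat \<Rightarrow> nat \<Rightarrow> (nat \<Rightarrow> real) \<Rightarrow> (nat \<Rightarrow> nat \<Rightarrow> real)
     \<Rightarrow> (nat \<times> nat \<Rightarrow> bool) \<Rightarrow> nat \<Rightarrow> nat \<Rightarrow> real" where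
  "gat_gamma \<beta> R n d \<mu> X A i j =
     exp (gat_score \<beta> R d \<mu> X i j) / (\<Sum>l\<in>nbhd n A i. exp (gat_score \<beta> R d \<mu> X i l))"

definition gat_out ::
  "real \<Rightarrow> real \<Rightarrow> nat \<Rightarrow> nat \<Rightarrow> (nat \<Rightarrow> real) \<Rightarrow> (nat \<Rightarrow> nat \<Rightarrow> real)
     \<Rightarrow> (nat \<times> nat \<Rightarrow> bool) \<Rightarrow> nat \<Rightarrow> real" where
  "gat_out \<beta> R n d \<mu> X A i =
     (\<Sum>j\<in>nbhd n A i. gat_gamma \<beta> R n d \<mu> X A i j * inner_d d (w_tilde d \<mu>) (X j))"

end

theory Submission
  imports Defs "HOL-Real_Asymp.Real_Asymp"
begin


lemma term_bound:
  fixes a b \<rho> \<delta> C :: real and n :: nat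
  assumes rho: "\<rho> > 0" and del: "\<delta> > 0" "\<delta> \<le> a" and C: "\<bar>b\<bar> \<le> C * a" "C \<ge> 1"
    and K1: "2*\<rho>*\<delta> \<ge> 1" and K2: "exp(2*\<rho>*\<delta>) > n*C" and n: "n \<ge> 1"
  shows "exp(\<rho>*(\<bar>a + b\<bar> - \<bar>a - b\<bar>)) * b \<ge> - (a * exp (2*\<rho>*a) / n)"
proof (cases "b \<ge> 0")
  case True
  have "0 \<le> a * exp (2*\<rho>*a) / n" using del by simp
  then show ?thesis using True by (smt (verit) exp_gt_zero mult_nonneg_nonneg)
next
  case False
  define c where "c = -b"
  have c: "c > 0" using False c_def by simp
  have a: "a > 0" using del by simp
  have ea: "exp(2*\<rho>*a) \<ge> exp(2*\<rho>*\<delta>)" using del rho by simp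
  have np: "real n > 0" using n by simp
  show ?thesis
  proof (cases "c \<ge> a")
    case True
    have eq: "\<rho>*(\<bar>a + b\<bar> - \<bar>a - b\<bar>) = -(2*\<rho>*a)" using True c_def a by auto
    have cC: "c \<le> C * a" using C c_def by simp
    have e4: "exp(2*\<rho>*a) * exp(2*\<rho>*a) > n * C"
    proof -
      have "exp(2*\<rho>*a) \<ge> 1" using rho a by simp
      hence "exp(2*\<rho>*a) * exp(2*\<rho>*a) \<ge> exp(2*\<rho>*a)" by simp
      thus ?thesis using ea K2 by linarith
    qed
    have "exp(-(2*\<rho>*a)) * c \<le> exp(-(2*\<rho>*a)) * (C*a)" using cC by simp
    also have "\<dots> = (n * C) * a / (n * exp(2*\<rho>*a))" using np by (simp add: exp_minus field_simps)
    also have "\<dots> \<le> (exp(2*\<rho>*a) * exp(2*\<rho>*a)) * a / (n * exp(2*\<rho>*a))"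
      using e4 a np by (intro divide_right_mono mult_right_mono) auto
    also have "\<dots> = a * exp (2*\<rho>*a) / n" using np by (simp add: field_simps)
    finally show ?thesis using eq c_def by simp
  next
    case False
    have eq: "\<rho>*(\<bar>a + b\<bar> - \<bar>a - b\<bar>) = -(2*\<rho>*c)" using False c_def a c by auto
    have "2*\<rho>*c < exp(2*\<rho>*c)" using exp_ge_add_one_self[of "2*\<rho>*c"] by linarith
    hence "exp(-(2*\<rho>*c)) * c \<le> 1 / (2*\<rho>)" using rho c by (simp add: exp_minus field_simps)
    also have "\<dots> \<le> a * exp (2*\<rho>*a) / n"
    proof -
      have "2*\<rho>*a \<ge> 1" using K1 del rho by (smt (verit) mult_left_mono)
      moreover have "exp(2*\<rho>*a) \<ge> n"
      proof -
        have "real n * 1 \<le> real n * C" using C(2) np by (intro mult_left_mono) auto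
        thus ?thesis using ea K2 by linarith
      qed
      ultimately have "(2*\<rho>*a) * exp(2*\<rho>*a) \<ge> 1 * real n" by (intro mult_mono) auto
      thus ?thesis using rho np by (simp add: field_simps)
    qed
    finally have "exp(-(2*\<rho>*c)) * c \<le> a * exp (2*\<rho>*a) / n" .
    moreover have "exp(\<rho>*(\<bar>a + b\<bar> - \<bar>a - b\<bar>)) * b = -(exp(-(2*\<rho>*c)) * c)"
      by (subst eq) (simp add: c_def)
    ultimately show ?thesis by linarith
  qed
qed

lemma core:
  fixes a :: "nat \<Rightarrow> real" and N :: "nat set" and \<rho> \<delta> C :: real and n :: nat
  assumes fin: "finite N" and iN: "i \<in> N" and card: "card N \<le> n"
    and rho: "\<rho> > 0" and del: "\<delta> > 0" "\<delta> \<le> a i" and C: "\<forall>j\<in>N. \<bar>a j\<bar> \<le> C * a i" "C \<ge> 1"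
    and K1: "2*\<rho>*\<delta> \<ge> 1" and K2: "exp(2*\<rho>*\<delta>) > n*C"
  shows "0 < (\<Sum>j\<in>N. exp(\<rho>*(\<bar>a i + a j\<bar> - \<bar>a i - a j\<bar>)) * a j)"
proof -
  define x where "x = a i * exp (2*\<rho>*a i)"
  have n: "n \<ge> 1" using card fin iN by (metis One_nat_def Suc_leI card_gt_0_iff empty_iff le_trans order_refl)
  have np: "real n > 0" using n by simp
  have xp: "x > 0" using del x_def by simp
  have sp: "(\<Sum>j\<in>N. exp(\<rho>*(\<bar>a i + a j\<bar> - \<bar>a i - a j\<bar>)) * a j)
     = exp(\<rho>*(\<bar>a i + a i\<bar> - \<bar>a i - a i\<bar>)) * a i + (\<Sum>j\<in>N-{i}. exp(\<rho>*(\<bar>a i + a j\<bar> - \<bar>a i - a j\<bar>)) * a j)"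
    using fin iN by (simp add: sum.remove)
  have t1: "exp(\<rho>*(\<bar>a i + a i\<bar> - \<bar>a i - a i\<bar>)) * a i = x"
    using del by (simp add: x_def)
  have lb: "(\<Sum>j\<in>N-{i}. exp(\<rho>*(\<bar>a i + a j\<bar> - \<bar>a i - a j\<bar>)) * a j) \<ge> (\<Sum>j\<in>N-{i}. - (x / n))"
    unfolding x_def
    by (intro sum_mono term_bound[OF rho del(1) del(2) _ C(2) K1 K2 n]) (use C in auto)
  have eqs: "(\<Sum>j\<in>N-{i}. - (x / n)) = - (real (card N - 1) * (x / n))"
    using fin iN by simp
  have lt: "real (card N - 1) * (x / n) < x"
  proof -
    have "real (card N - 1) < n" using card fin iN
      by (metis card_gt_0_iff diff_less empty_iff less_le_trans of_nat_less_iff zero_less_one)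
    hence "real (card N - 1) * (x / n) < n * (x / n)" using xp np by (intro mult_strict_right_mono) auto
    thus ?thesis using np by simp
  qed
  show ?thesis using sp t1 lb eqs lt by linarith
qed



lemma leaky_sum: "leaky_relu \<beta> x + leaky_relu \<beta> (-x) = (1 - \<beta>) * \<bar>x\<bar>"
  by (auto simp: leaky_relu_def algebra_simps)

lemma Psi_closed: "Psi \<beta> R a b = R * (1 - \<beta>) * (\<bar>a + b\<bar> - \<bar>a - b\<bar>)"
proof -
  have "Psi \<beta> R a b = R * (leaky_relu \<beta> (a+b) + leaky_relu \<beta> (-(a+b))) - R * (leaky_relu \<beta> (a-b) + leaky_relu \<beta> (-(a-b)))"
    by (simp add: Psi_def eval_nat_numeral S_mat_def r_vec_def algebra_simps)
  also have "\<dots> = R * (1 - \<beta>) * (\<bar>a + b\<bar> - \<bar>a - b\<bar>)"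
    by (simp only: leaky_sum) (simp add: algebra_simps)
  finally show ?thesis .
qed

lemma nbhd_props: "i < n \<Longrightarrow> finite (nbhd n A i) \<and> i \<in> nbhd n A i \<and> card (nbhd n A i) \<le> n \<and> nbhd n A i \<subseteq> {..<n}"
proof -
  assume i: "i < n"
  have sub: "nbhd n A i \<subseteq> {..<n}" by (auto simp: nbhd_def)
  then have "finite (nbhd n A i)" by (rule finite_subset) simp
  moreover have "card (nbhd n A i) \<le> n" using card_mono[OF _ sub] by simp
  ultimately show ?thesis using i sub by (auto simp: nbhd_def)
qed

lemma gat_out_eq:
  fixes X :: "nat \<Rightarrow> nat \<Rightarrow> real" and d n i :: nat and \<mu> :: "nat \<Rightarrow> real" and A :: "nat \<times> nat \<Rightarrow> bool"
  defines "a \<equiv> \<lambda>j. inner_d d (w_tilde d \<mu>) (X j)"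
  defines "N \<equiv> nbhd n A i"
  shows "gat_out \<beta> R n d \<mu> X A i =
    (\<Sum>j\<in>N. exp (R*(1-\<beta>)*(\<bar>a i + a j\<bar> - \<bar>a i - a j\<bar>)) * a j) /
    (\<Sum>l\<in>N. exp (R*(1-\<beta>)*(\<bar>a i + a l\<bar> - \<bar>a i - a l\<bar>)))"
  unfolding gat_out_def gat_gamma_def gat_score_def Psi_closed a_def N_def
  by (simp add: sum_divide_distrib[symmetric] field_simps)

lemma gat_sign:
  fixes X :: "nat \<Rightarrow> nat \<Rightarrow> real" and \<delta> C R \<beta> :: real and d n i :: nat and \<mu> :: "nat \<Rightarrow> real" and A :: "nat \<times> nat \<Rightarrow> bool"
  defines "a \<equiv> \<lambda>j. inner_d d (w_tilde d \<mu>) (X j)"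
  assumes i: "i < n" and R: "R > 0" and beta: "\<beta> < 1"
    and del: "\<delta> > 0" "\<forall>j<n. \<delta> \<le> \<bar>a j\<bar>"
    and C: "\<forall>i<n. \<forall>j<n. \<bar>a j\<bar> \<le> C * \<bar>a i\<bar>" "C \<ge> 1"
    and K1: "2*(R*(1-\<beta>))*\<delta> \<ge> 1" and K2: "exp(2*(R*(1-\<beta>))*\<delta>) > n*C"
  shows "(a i > 0 \<longrightarrow> gat_out \<beta> R n d \<mu> X A i > 0) \<and> (a i < 0 \<longrightarrow> gat_out \<beta> R n d \<mu> X A i < 0)"
proof -
  define N where "N = nbhd n A i"
  define \<rho> where "\<rho> = R*(1-\<beta>)"
  have rho: "\<rho> > 0" using R beta by (simp add: \<rho>_def)
  have NP: "finite N" "i \<in> N" "card N \<le> n" "N \<subseteq> {..<n}" using nbhd_props[OF i] by (auto simp: N_def)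
  have eq: "gat_out \<beta> R n d \<mu> X A i =
    (\<Sum>j\<in>N. exp (\<rho>*(\<bar>a i + a j\<bar> - \<bar>a i - a j\<bar>)) * a j) /
    (\<Sum>l\<in>N. exp (\<rho>*(\<bar>a i + a l\<bar> - \<bar>a i - a l\<bar>)))"
    unfolding gat_out_eq a_def N_def \<rho>_def ..
  have Zp: "(\<Sum>l\<in>N. exp (\<rho>*(\<bar>a i + a l\<bar> - \<bar>a i - a l\<bar>))) > 0"
    using NP by (intro sum_pos) auto
  have pos: "a i > 0 \<Longrightarrow> gat_out \<beta> R n d \<mu> X A i > 0"
  proof -
    assume ai: "a i > 0"
    have "0 < (\<Sum>j\<in>N. exp(\<rho>*(\<bar>a i + a j\<bar> - \<bar>a i - a j\<bar>)) * a j)"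
    proof (rule core[OF NP(1,2,3) rho del(1)])
      show "\<delta> \<le> a i" using del i ai by force
      show "\<forall>j\<in>N. \<bar>a j\<bar> \<le> C * a i" using C(1) NP(4) i ai by force
    qed (use C K1 K2 \<rho>_def in auto)
    thus ?thesis using eq Zp by simp
  qed
  have neg: "a i < 0 \<Longrightarrow> gat_out \<beta> R n d \<mu> X A i < 0"
  proof -
    assume ai: "a i < 0"
    define b where "b = (\<lambda>j. - a j)"
    have "0 < (\<Sum>j\<in>N. exp(\<rho>*(\<bar>b i + b j\<bar> - \<bar>b i - b j\<bar>)) * b j)"
    proof (rule core[OF NP(1,2,3) rho del(1)])
      show "\<delta> \<le> b i" using del i ai by (force simp: b_def)
      show "\<forall>j\<in>N. \<bar>b j\<bar> \<le> C * b i" using C(1) NP(4) i ai by (force simp: b_def)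
    qed (use C K1 K2 \<rho>_def in auto)
    also have "(\<Sum>j\<in>N. exp(\<rho>*(\<bar>b i + b j\<bar> - \<bar>b i - b j\<bar>)) * b j)
       = - (\<Sum>j\<in>N. exp(\<rho>*(\<bar>a i + a j\<bar> - \<bar>a i - a j\<bar>)) * a j)"
      unfolding b_def by (simp add: sum_negf[symmetric] abs_minus_commute) (smt (verit) abs_minus_commute minus_diff_eq sum.cong)
    finally show ?thesis using eq Zp by (simp add: divide_neg_pos)
  qed
  show ?thesis using pos neg by blast
qed



lemma vnorm_pos: "\<exists>k<d. \<mu> k \<noteq> 0 \<Longrightarrow> vnorm d \<mu> > 0"
proof -
  assume "\<exists>k<d. \<mu> k \<noteq> 0"
  then obtain k where k: "k < d" "\<mu> k \<noteq> 0" by blast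
  have "0 < (\<Sum>k<d. (\<mu> k)\<^sup>2)"
    by (rule sum_pos2[where i=k]) (use k in auto)
  thus ?thesis unfolding vnorm_def by simp
qed

lemma vnorm_sq: "(vnorm d \<mu>)\<^sup>2 = (\<Sum>k<d. (\<mu> k)\<^sup>2)"
  unfolding vnorm_def by (simp add: sum_nonneg)

lemma dist_proj:
  fixes \<mu> :: "nat \<Rightarrow> real" and \<sigma> s :: real and d :: nat
  assumes sig: "\<sigma> > 0" and nz: "\<exists>k<d. \<mu> k \<noteq> 0"
  defines "M \<equiv> PiM {..<d} (\<lambda>k. density lborel (normal_density (s * \<mu> k) \<sigma>))"
  shows "distributed M lborel (\<lambda>x. inner_d d (w_tilde d \<mu>) x) (normal_density (s * vnorm d \<mu>) \<sigma>)"
proof -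
  define Nk where "Nk = (\<lambda>k. density lborel (normal_density (s * \<mu> k) \<sigma>))"
  have M_def': "M = PiM {..<d} Nk" unfolding M_def Nk_def ..
  have pN: "prob_space (Nk k)" for k unfolding Nk_def using sig by (rule prob_space_normal_density)
  interpret prob_space M unfolding M_def' by (intro prob_space_PiM pN)
  have sN: "sets (Nk k) = sets borel" for k unfolding Nk_def by simp
  have comp: "distr M borel (\<lambda>x. x k) = Nk k" if k: "k < d" for k
  proof -
    have "distr M borel (\<lambda>x. x k) = distr M (Nk k) (\<lambda>x. x k)" by (rule distr_cong) (auto simp: sN)
    also have "\<dots> = Nk k" unfolding M_def' by (rule distr_PiM_component) (use pN k in auto)
    finally show ?thesis .
  qed
  have rv: "random_variable borel (\<lambda>x. x k)" if "k < d" for k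
  proof -
    have "measurable M (Nk k) = measurable M borel" by (rule measurable_cong_sets) (simp_all add: sN)
    moreover have "(\<lambda>x. x k) \<in> measurable M (Nk k)" unfolding M_def' 
      by (rule measurable_component_singleton) (use that in simp)
    ultimately show ?thesis by simp
  qed
  have ind: "indep_vars (\<lambda>_. borel) (\<lambda>k x. x k) {..<d}"
  proof (subst indep_vars_iff_distr_eq_PiM')
    show "{..<d} \<noteq> {}" using nz by auto
    show "random_variable borel (\<lambda>x. x k)" if "k \<in> {..<d}" for k using rv that by simp
    have "distr M (PiM {..<d} (\<lambda>_. borel)) (\<lambda>x. \<lambda>k\<in>{..<d}. x k) = distr M M (\<lambda>x. x)"
    proof (rule distr_cong)
      show "sets (PiM {..<d} (\<lambda>_. borel)) = sets M" unfolding M_def' by (rule sets_PiM_cong) (simp_all add: sN)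
      show "(\<lambda>k\<in>{..<d}. x k) = x" if "x \<in> space M" for x
        using that unfolding M_def' space_PiM by (simp add: PiE_def extensional_def restrict_def fun_eq_iff)
    qed simp
    also have "\<dots> = M" by simp
    also have "M = PiM {..<d} (\<lambda>k. distr M borel (\<lambda>x. x k))"
      unfolding M_def' by (rule PiM_cong) (simp_all add: comp[unfolded M_def'])
    finally show "distr M (PiM {..<d} (\<lambda>_. borel)) (\<lambda>x. \<lambda>k\<in>{..<d}. x k) = PiM {..<d} (\<lambda>k. distr M borel (\<lambda>x. x k))" .
  qed
  define w where "w = w_tilde d \<mu>"
  define m where "m = vnorm d \<mu>"
  have mpos: "m > 0" unfolding m_def using nz by (rule vnorm_pos)
  define J where "J = {k\<in>{..<d}. \<mu> k \<noteq> 0}"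
  have J: "finite J" "J \<noteq> {}" "J \<subseteq> {..<d}" using nz by (auto simp: J_def)
  have wnz: "w k \<noteq> 0" if "k \<in> J" for k using that mpos by (auto simp: J_def w_def w_tilde_def m_def)
  have dk: "distributed M lborel (\<lambda>x. x k) (normal_density (s * \<mu> k) \<sigma>)" if "k < d" for k
    unfolding distributed_def
  proof (intro conjI)
    show "distr M lborel (\<lambda>x. x k) = density lborel (\<lambda>x. ennreal (normal_density (s * \<mu> k) \<sigma> x))"
    proof -
      have "distr M lborel (\<lambda>x. x k) = distr M borel (\<lambda>x. x k)" by (rule distr_cong) auto
      also have "\<dots> = Nk k" using comp that .
      finally show ?thesis unfolding Nk_def .
    qed
    show "(\<lambda>x. x k) \<in> measurable M lborel" using rv that by simp
  qed (auto simp: normal_density_nonneg)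
  have dwk: "distributed M lborel (\<lambda>x. w k * x k) (normal_density (w k * (s * \<mu> k)) (\<bar>w k\<bar> * \<sigma>))" if "k \<in> J" for k
  proof -
    have kd: "k < d" using that J by auto
    show ?thesis using normal_density_affine[OF dk[OF kd] sig wnz[OF that], where \<beta>=0] by simp
  qed
  have indJ: "indep_vars (\<lambda>_. borel) (\<lambda>k x. w k * x k) J"
    by (rule indep_vars_compose2[OF indep_vars_subset[OF ind J(3)]]) simp
  have S: "distributed M lborel (\<lambda>x. \<Sum>k\<in>J. w k * x k)
      (normal_density (\<Sum>k\<in>J. w k * (s * \<mu> k)) (sqrt (\<Sum>k\<in>J. (\<bar>w k\<bar> * \<sigma>)\<^sup>2)))"
    by (rule sum_indep_normal[OF J(1) J(2) indJ]) (use wnz sig dwk in auto)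
  have sumJ: "(\<Sum>k\<in>J. f k) = (\<Sum>k<d. f k)" if "\<And>k. k < d \<Longrightarrow> \<mu> k = 0 \<Longrightarrow> f k = 0" for f :: "nat \<Rightarrow> real"
    by (rule sum.mono_neutral_left) (use that in \<open>auto simp: J_def\<close>)
  have e1: "(\<lambda>x. \<Sum>k\<in>J. w k * x k) = (\<lambda>x. inner_d d (w_tilde d \<mu>) x)"
    unfolding inner_d_def w_def by (rule ext, rule sumJ) (simp add: w_tilde_def)
  have sq: "(\<Sum>k<d. (\<mu> k)\<^sup>2) = m\<^sup>2" unfolding m_def by (simp add: vnorm_sq)
  have e2: "(\<Sum>k\<in>J. w k * (s * \<mu> k)) = s * m"
  proof -
    have "(\<Sum>k\<in>J. w k * (s * \<mu> k)) = (\<Sum>k\<in>J. (s / m) * (\<mu> k)\<^sup>2)"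
      by (rule sum.cong) (auto simp: w_def w_tilde_def m_def power2_eq_square)
    also have "\<dots> = (\<Sum>k<d. (s / m) * (\<mu> k)\<^sup>2)" by (rule sumJ) simp
    also have "\<dots> = (s / m) * m\<^sup>2" by (simp only: sum_distrib_left[symmetric] sq)
    finally show ?thesis using mpos by (simp add: power2_eq_square)
  qed
  have e3: "sqrt (\<Sum>k\<in>J. (\<bar>w k\<bar> * \<sigma>)\<^sup>2) = \<sigma>"
  proof -
    have "(\<Sum>k\<in>J. (\<bar>w k\<bar> * \<sigma>)\<^sup>2) = (\<Sum>k\<in>J. (\<sigma>/m)\<^sup>2 * (\<mu> k)\<^sup>2)"
      by (rule sum.cong) (auto simp: w_def w_tilde_def m_def power2_eq_square)
    also have "\<dots> = (\<Sum>k<d. (\<sigma>/m)\<^sup>2 * (\<mu> k)\<^sup>2)" by (rule sumJ) simp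
    also have "\<dots> = (\<sigma>/m)\<^sup>2 * m\<^sup>2" by (simp only: sum_distrib_left[symmetric] sq)
    also have "\<dots> = \<sigma>\<^sup>2" using mpos by (simp add: power_divide)
    finally show ?thesis using sig by simp
  qed
  show ?thesis using S unfolding e1 e2 e3 m_def .
qed



lemma normal_density_le: "\<sigma> > 0 \<Longrightarrow> normal_density m \<sigma> x \<le> 1 / \<sigma>"
proof -
  assume s: "\<sigma> > 0"
  have "sqrt (2 * pi * \<sigma>\<^sup>2) = sqrt (2*pi) * \<sigma>" using s by (simp add: real_sqrt_mult)
  moreover have "sqrt (2*pi) \<ge> 1" using pi_gt3 by simp
  ultimately have sq: "sqrt (2 * pi * \<sigma>\<^sup>2) \<ge> \<sigma>" using s by (smt (verit) mult_le_cancel_right1)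
  have "exp (-(x - m)\<^sup>2/ (2 * \<sigma>\<^sup>2)) \<le> 1" by simp
  moreover have "normal_density m \<sigma> x = exp (-(x - m)\<^sup>2/ (2 * \<sigma>\<^sup>2)) / sqrt (2 * pi * \<sigma>\<^sup>2)"
    by (simp add: normal_density_def)
  ultimately have "normal_density m \<sigma> x \<le> 1 / sqrt (2 * pi * \<sigma>\<^sup>2)"
    by (simp add: divide_right_mono)
  also have "\<dots> \<le> 1 / \<sigma>" using sq s by (intro divide_left_mono) auto
  finally show ?thesis .
qed

lemma small_ball:
  assumes s: "\<sigma> > 0" and d: "\<delta> > 0"
  shows "measure (density lborel (normal_density m \<sigma>)) {-\<delta><..<\<delta>} \<le> 2 * \<delta> / \<sigma>"
proof -
  have "emeasure (density lborel (normal_density m \<sigma>)) {-\<delta><..<\<delta>}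
      = (\<integral>\<^sup>+x. ennreal (normal_density m \<sigma> x) * indicator {-\<delta><..<\<delta>} x \<partial>lborel)"
    by (subst emeasure_density) auto
  also have "\<dots> \<le> (\<integral>\<^sup>+x. ennreal (1/\<sigma>) * indicator {-\<delta><..<\<delta>} x \<partial>lborel)"
    by (intro nn_integral_mono mult_right_mono ennreal_leI) (auto simp: normal_density_le[OF s])
  also have "\<dots> = ennreal (1/\<sigma>) * emeasure lborel {-\<delta><..<\<delta>}"
    by (rule nn_integral_cmult_indicator) simp
  also have "\<dots> = ennreal (2 * \<delta> / \<sigma>)" using d s by (simp add: ennreal_mult[symmetric])
  finally show ?thesis unfolding measure_def using d s by (intro enn2real_leI) auto
qed

lemma bad_bound:
  fixes \<mu> :: "nat \<Rightarrow> real" and \<sigma> s \<delta> t :: real and d :: nat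
  assumes sig: "\<sigma> > 0" and nz: "\<exists>k<d. \<mu> k \<noteq> 0" and del: "\<delta> > 0" and t: "t > 0"
  defines "M \<equiv> PiM {..<d} (\<lambda>k. density lborel (normal_density (s * \<mu> k) \<sigma>))"
  defines "a \<equiv> inner_d d (w_tilde d \<mu>)"
  shows "measure M {x\<in>space M. \<bar>a x\<bar> < \<delta> \<or> \<sigma> * t \<le> \<bar>a x - s * vnorm d \<mu>\<bar>} \<le> 2*\<delta>/\<sigma> + 1/t\<^sup>2"
proof -
  define m where "m = vnorm d \<mu>"
  interpret prob_space M unfolding M_def using sig by (intro prob_space_PiM prob_space_normal_density)
  have D: "distributed M lborel a (normal_density (s * m) \<sigma>)"
    unfolding a_def M_def m_def by (rule dist_proj[OF sig nz])
  have am[measurable]: "a \<in> borel_measurable M" using distributed_measurable[OF D] by simp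
  have p1: "prob {x\<in>space M. \<bar>a x\<bar> < \<delta>} \<le> 2*\<delta>/\<sigma>"
  proof -
    have "{x\<in>space M. \<bar>a x\<bar> < \<delta>} = a -` {-\<delta><..<\<delta>} \<inter> space M" by auto
    hence "prob {x\<in>space M. \<bar>a x\<bar> < \<delta>} = measure (distr M lborel a) {-\<delta><..<\<delta>}"
      by (simp add: measure_distr)
    also have "\<dots> = measure (density lborel (normal_density (s * m) \<sigma>)) {-\<delta><..<\<delta>}"
      using distributed_distr_eq_density[OF D] by simp
    also have "\<dots> \<le> 2*\<delta>/\<sigma>" by (rule small_ball[OF sig del])
    finally show ?thesis .
  qed
  define f where "f = (\<lambda>x. a x - s * m)"
  have Df: "distributed M lborel f (normal_density 0 \<sigma>)"
    using normal_density_affine[OF D sig, of 1 "- (s*m)"] by (simp add: f_def)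
  have fm[measurable]: "f \<in> borel_measurable M" unfolding f_def by measurable
  have intf: "integrable M (\<lambda>x. f x ^ 2)"
  proof -
    have "integrable lborel (\<lambda>x. normal_density 0 \<sigma> x * (x - 0)^2)"
      by (rule integrable_normal_moment) (rule sig)
    thus ?thesis using distributed_integrable[OF Df, of "\<lambda>x. x^2"] by simp
  qed
  have Ef: "expectation f = 0" using normal_distributed_expectation[OF sig Df] .
  have Vf: "variance f = \<sigma>\<^sup>2" using normal_distributed_variance[OF sig Df] .
  have p2: "prob {x\<in>space M. \<sigma> * t \<le> \<bar>a x - s * m\<bar>} \<le> 1/t\<^sup>2"
  proof -
    have "prob {x\<in>space M. \<sigma> * t \<le> \<bar>f x - expectation f\<bar>} \<le> variance f / (\<sigma>*t)\<^sup>2"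
      by (rule Chebyshev_inequality[OF _ intf]) (use sig t in auto)
    thus ?thesis using Ef Vf sig by (simp add: f_def power_mult_distrib)
  qed
  have "prob ({x\<in>space M. \<bar>a x\<bar> < \<delta>} \<union> {x\<in>space M. \<sigma> * t \<le> \<bar>a x - s * m\<bar>})
     \<le> prob {x\<in>space M. \<bar>a x\<bar> < \<delta>} + prob {x\<in>space M. \<sigma> * t \<le> \<bar>a x - s * m\<bar>}"
    by (rule measure_Un_le) measurable
  moreover have "{x\<in>space M. \<bar>a x\<bar> < \<delta> \<or> \<sigma> * t \<le> \<bar>a x - s * vnorm d \<mu>\<bar>}
      = {x\<in>space M. \<bar>a x\<bar> < \<delta>} \<union> {x\<in>space M. \<sigma> * t \<le> \<bar>a x - s * m\<bar>}"
    by (auto simp: m_def)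
  ultimately show ?thesis using p1 p2 by simp
qed



definition Fs :: "nat \<Rightarrow> nat \<Rightarrow> (nat \<Rightarrow> nat \<Rightarrow> real) measure" where
  "Fs n d = PiM {..<n} (\<lambda>_. PiM {..<d} (\<lambda>_. lborel))"

lemma sets_features: "sets (csbm_features n d \<mu> \<sigma> \<epsilon>) = sets (Fs n d)"
  unfolding csbm_features_def Fs_def
  by (intro sets_PiM_cong refl) simp

lemma space_features: "space (csbm_features n d \<mu> \<sigma> \<epsilon>) = space (Fs n d)"
  using sets_features by (rule sets_eq_imp_space_eq)

lemma prob_features: "\<sigma> > 0 \<Longrightarrow> prob_space (csbm_features n d \<mu> \<sigma> \<epsilon>)"
  unfolding csbm_features_def by (intro prob_space_PiM prob_space_normal_density)

lemma comp_meas1: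
  assumes "\<And>k. k \<in> I \<Longrightarrow> sets (N k) = sets borel"
  shows "(\<lambda>x. x k :: real) \<in> borel_measurable (PiM I N)"
proof (cases "k \<in> I")
  case True
  have "measurable (PiM I N) (N k) = measurable (PiM I N) borel" by (rule measurable_cong_sets) (simp_all add: assms True)
  moreover have "(\<lambda>x. x k) \<in> measurable (PiM I N) (N k)" by (rule measurable_component_singleton) (rule True)
  ultimately show ?thesis by simp
next
  case False
  have "(\<lambda>x. x k :: real) \<in> borel_measurable (PiM I N) \<longleftrightarrow> (\<lambda>x. undefined :: real) \<in> borel_measurable (PiM I N)"
    by (rule measurable_cong) (use False in \<open>auto simp: space_PiM PiE_def extensional_def\<close>)
  thus ?thesis by simp
qed

lemma comp_meas2:
  "(\<lambda>X. X i k :: real) \<in> borel_measurable (Fs n d)"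
proof (cases "i < n")
  case True
  have "(\<lambda>X. X i) \<in> measurable (Fs n d) (PiM {..<d} (\<lambda>_. lborel))"
    unfolding Fs_def by (rule measurable_component_singleton) (use True in simp)
  moreover have "(\<lambda>x. x k :: real) \<in> borel_measurable (PiM {..<d} (\<lambda>_. lborel))"
    by (rule comp_meas1) simp
  ultimately show ?thesis by (rule measurable_compose)
next
  case False
  have "(\<lambda>X. X i k :: real) \<in> borel_measurable (Fs n d) \<longleftrightarrow> (\<lambda>X. undefined k :: real) \<in> borel_measurable (Fs n d)"
    by (rule measurable_cong) (use False in \<open>auto simp: Fs_def space_PiM PiE_def extensional_def\<close>)
  thus ?thesis by simp
qed

lemma inner_meas[measurable]:
  "(\<lambda>X. inner_d d' w (X i)) \<in> borel_measurable (Fs n d)"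
  unfolding inner_d_def by (intro borel_measurable_sum borel_measurable_times borel_measurable_const comp_meas2)

definition Good :: "nat \<Rightarrow> nat \<Rightarrow> (nat \<Rightarrow> real) \<Rightarrow> real \<Rightarrow> real \<Rightarrow> real \<Rightarrow> (nat \<Rightarrow> nat \<Rightarrow> real) set" where
  "Good n d \<mu> \<delta> lo hi = {X \<in> space (Fs n d). \<forall>i<n.
      \<delta> \<le> \<bar>inner_d d (w_tilde d \<mu>) (X i)\<bar> \<and> lo \<le> \<bar>inner_d d (w_tilde d \<mu>) (X i)\<bar> \<and> \<bar>inner_d d (w_tilde d \<mu>) (X i)\<bar> \<le> hi}"

lemma Good_sets: "Good n d \<mu> \<delta> lo hi \<in> sets (Fs n d)"
  unfolding Good_def by measurable

lemma good_bound:
  fixes \<mu> :: "nat \<Rightarrow> real" and \<sigma> \<delta> t :: real and d n :: nat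
  assumes sig: "\<sigma> > 0" and nz: "\<exists>k<d. \<mu> k \<noteq> 0" and del: "\<delta> > 0" and t: "t > 0"
  shows "measure (csbm_features n d \<mu> \<sigma> \<epsilon>) (Good n d \<mu> \<delta> (vnorm d \<mu> - \<sigma>*t) (vnorm d \<mu> + \<sigma>*t))
     \<ge> 1 - n * (2*\<delta>/\<sigma> + 1/t\<^sup>2)"
proof -
  define F where "F = csbm_features n d \<mu> \<sigma> \<epsilon>"
  define m where "m = vnorm d \<mu>"
  define a where "a = inner_d d (w_tilde d \<mu>)"
  define sg where "sg = (\<lambda>i. if \<epsilon> i then 1 else (-1::real))"
  define Mi where "Mi = (\<lambda>i. PiM {..<d} (\<lambda>k. density lborel (normal_density (sg i * \<mu> k) \<sigma>)))"
  have F_eq: "F = PiM {..<n} Mi" unfolding F_def csbm_features_def Mi_def sg_def ..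
  interpret prob_space F unfolding F_def using sig by (rule prob_features)
  have pMi: "prob_space (Mi i)" for i unfolding Mi_def using sig by (intro prob_space_PiM prob_space_normal_density)
  define Q where "Q = (\<lambda>i x. \<bar>a x\<bar> < \<delta> \<or> \<sigma> * t \<le> \<bar>a x - sg i * m\<bar>)"
  define Bad where "Bad = (\<lambda>i. {X \<in> space F. Q i (X i)})"
  have sF: "sets F = sets (Fs n d)" unfolding F_def by (rule sets_features)
  have spF: "space F = space (Fs n d)" unfolding F_def by (rule space_features)
  have Bad_sets: "Bad i \<in> sets F" for i
  proof -
    have "{X \<in> space (Fs n d). Q i (X i)} \<in> sets (Fs n d)" unfolding Q_def a_def by measurable
    thus ?thesis unfolding Bad_def spF sF .
  qed
  have sMi: "sets (Mi i) = sets (PiM {..<d} (\<lambda>_. lborel))" for i unfolding Mi_def by (intro sets_PiM_cong refl) simp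
  have am: "a \<in> borel_measurable (Mi i)" for i
    unfolding a_def inner_d_def Mi_def by (intro borel_measurable_sum borel_measurable_times borel_measurable_const comp_meas1) simp
  have Bad_le: "measure F (Bad i) \<le> 2*\<delta>/\<sigma> + 1/t\<^sup>2" if i: "i < n" for i
  proof -
    have Qs: "{x \<in> space (Mi i). Q i x} \<in> sets (Mi i)" unfolding Q_def using am[of i] by measurable
    have "Bad i = (\<lambda>X. X i) -` {x \<in> space (Mi i). Q i x} \<inter> space F"
      unfolding Bad_def F_eq using i by (auto simp: space_PiM)
    hence "measure F (Bad i) = measure (distr F (Mi i) (\<lambda>X. X i)) {x \<in> space (Mi i). Q i x}"
      by (simp add: measure_distr F_eq measurable_component_singleton i Qs)
    also have "distr F (Mi i) (\<lambda>X. X i) = Mi i" unfolding F_eq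
      by (rule distr_PiM_component) (use pMi i in auto)
    also have "measure (Mi i) {x \<in> space (Mi i). Q i x} \<le> 2*\<delta>/\<sigma> + 1/t\<^sup>2"
      unfolding Q_def a_def m_def Mi_def by (rule bad_bound[OF sig nz del t])
    finally show ?thesis .
  qed
  define G where "G = Good n d \<mu> \<delta> (m - \<sigma>*t) (m + \<sigma>*t)"
  have Gs: "G \<in> sets F" unfolding G_def sF by (rule Good_sets)
  have sub: "space F - G \<subseteq> (\<Union>i<n. Bad i)"
  proof
    fix X assume X: "X \<in> space F - G"
    then obtain i where i: "i < n" and fail: "\<not> (\<delta> \<le> \<bar>a (X i)\<bar> \<and> m - \<sigma>*t \<le> \<bar>a (X i)\<bar> \<and> \<bar>a (X i)\<bar> \<le> m + \<sigma>*t)"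
      unfolding G_def Good_def a_def spF by auto
    have "Q i (X i)"
    proof (rule ccontr)
      assume "\<not> Q i (X i)"
      hence "\<delta> \<le> \<bar>a (X i)\<bar>" "\<bar>a (X i) - sg i * m\<bar> < \<sigma> * t" unfolding Q_def by auto
      moreover have "sg i = 1 \<or> sg i = -1" unfolding sg_def by auto
      moreover have "m \<ge> 0" unfolding m_def vnorm_def by (simp add: sum_nonneg)
      ultimately show False using fail by auto
    qed
    thus "X \<in> (\<Union>i<n. Bad i)" using i X unfolding Bad_def by auto
  qed
  have "measure F (space F - G) \<le> measure F (\<Union>i<n. Bad i)"
    by (rule finite_measure_mono[OF sub]) (use Bad_sets in auto)
  also have "\<dots> \<le> (\<Sum>i<n. measure F (Bad i))" by (rule measure_UNION_le) (use Bad_sets in auto)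
  also have "\<dots> \<le> (\<Sum>i<n. 2*\<delta>/\<sigma> + 1/t\<^sup>2)" by (rule sum_mono) (rule Bad_le, simp)
  also have "\<dots> = n * (2*\<delta>/\<sigma> + 1/t\<^sup>2)" by simp
  finally have "measure F (space F - G) \<le> n * (2*\<delta>/\<sigma> + 1/t\<^sup>2)" .
  moreover have "measure F (space F - G) = 1 - measure F G" using prob_compl[OF Gs] by simp
  ultimately show ?thesis unfolding F_def G_def m_def by simp
qed



definition Gs :: "nat \<Rightarrow> (nat \<times> nat \<Rightarrow> bool) measure" where
  "Gs n = PiM {(i, j). i < j \<and> j < n} (\<lambda>_. count_space UNIV)"

lemma sets_graph: "sets (csbm_graph n p q \<epsilon>) = sets (Gs n)"
  unfolding csbm_graph_def Gs_def
  by (intro sets_PiM_cong refl) (simp split: prod.splits)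

lemma space_graph: "space (csbm_graph n p q \<epsilon>) = space (Gs n)"
  using sets_graph by (rule sets_eq_imp_space_eq)

lemma prob_graph: "prob_space (csbm_graph n p q \<epsilon>)"
  unfolding csbm_graph_def by (intro prob_space_PiM) (simp add: prob_space_measure_pmf split: prod.splits)

lemma finite_space_Gs: "finite (space (Gs n))"
proof -
  have "finite {(i, j). i < j \<and> j < (n::nat)}"
    by (rule finite_subset[of _ "{..<n} \<times> {..<n}"]) auto
  thus ?thesis unfolding Gs_def space_PiM by (intro finite_PiE) auto
qed

lemma singleton_Gs: "A0 \<in> space (Gs n) \<Longrightarrow> {A0} \<in> sets (Gs n)"
proof -
  assume A0: "A0 \<in> space (Gs n)"
  have fin: "finite {(i, j). i < j \<and> j < (n::nat)}"
    by (rule finite_subset[of _ "{..<n} \<times> {..<n}"]) auto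
  have ext: "A0 \<in> extensional {(i, j). i < j \<and> j < n}"
    using A0 unfolding Gs_def space_PiM by (simp add: PiE_def)
  have "{A0} = PiE {(i, j). i < j \<and> j < n} (\<lambda>k. {A0 k})"
  proof (intro set_eqI iffI)
    fix x assume "x \<in> {A0}" thus "x \<in> PiE {(i, j). i < j \<and> j < n} (\<lambda>k. {A0 k})" using ext by (auto simp: PiE_iff)
  next
    fix x assume x: "x \<in> PiE {(i, j). i < j \<and> j < n} (\<lambda>k. {A0 k})"
    have "x = A0" by (rule extensionalityI[of x "{(i, j). i < j \<and> j < n}" A0]) (use x ext in \<open>auto simp: PiE_iff\<close>)
    thus "x \<in> {A0}" by simp
  qed
  also have "\<dots> \<in> sets (Gs n)" unfolding Gs_def by (rule sets_PiM_I_finite[OF fin]) simp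
  finally show ?thesis .
qed

definition Nn :: "nat \<Rightarrow> nat \<Rightarrow> ((nat \<Rightarrow> nat \<Rightarrow> real) \<times> (nat \<times> nat \<Rightarrow> bool)) measure" where
  "Nn n d = Fs n d \<Otimes>\<^sub>M Gs n"

lemma kernel_in:
  assumes sig: "\<sigma> > 0"
  shows "(\<lambda>\<epsilon>. csbm_features n d \<mu> \<sigma> \<epsilon> \<Otimes>\<^sub>M csbm_graph n p q \<epsilon>) \<in> measurable (measure_pmf U) (subprob_algebra (Nn n d))"
proof -
  have "csbm_features n d \<mu> \<sigma> \<epsilon> \<Otimes>\<^sub>M csbm_graph n p q \<epsilon> \<in> space (subprob_algebra (Nn n d))" for \<epsilon>
    unfolding space_subprob_algebra Nn_def
    using prob_space_pair[OF prob_features[OF sig] prob_graph]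
    by (auto intro!: prob_space_imp_subprob_space sets_pair_measure_cong sets_features sets_graph)
  thus ?thesis by simp
qed

lemma CSBM_facts:
  assumes sig: "\<sigma> > 0"
  shows "prob_space (CSBM n d \<mu> \<sigma> p q)" "sets (CSBM n d \<mu> \<sigma> p q) = sets (Nn n d)"
    "space (CSBM n d \<mu> \<sigma> p q) = space (Nn n d)"
proof -
  have K: "(\<lambda>\<epsilon>. csbm_features n d \<mu> \<sigma> \<epsilon> \<Otimes>\<^sub>M csbm_graph n p q \<epsilon>) \<in> measurable (measure_pmf (pmf_of_set ({..<n} \<rightarrow>\<^sub>E (UNIV :: bool set)))) (subprob_algebra (Nn n d))"
    by (rule kernel_in[OF sig])
  show "prob_space (CSBM n d \<mu> \<sigma> p q)" unfolding CSBM_def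
    by (rule measure_pmf.prob_space_bind[OF _ K]) (auto intro!: prob_space_pair prob_features sig prob_graph)
  show "sets (CSBM n d \<mu> \<sigma> p q) = sets (Nn n d)" unfolding CSBM_def
    by (rule sets_bind) (auto simp: Nn_def intro!: sets_pair_measure_cong sets_features sets_graph)
  thus "space (CSBM n d \<mu> \<sigma> p q) = space (Nn n d)" by (rule sets_eq_imp_space_eq)
qed

lemma csbm_lower:
  fixes P :: "(nat \<Rightarrow> nat \<Rightarrow> real) \<Rightarrow> (nat \<times> nat \<Rightarrow> bool) \<Rightarrow> bool"
    and \<mu> :: "nat \<Rightarrow> real" and \<sigma> \<delta> t :: real and d n :: nat
  assumes sig: "\<sigma> > 0" and nz: "\<exists>k<d. \<mu> k \<noteq> 0" and del: "\<delta> > 0" and t: "t > 0"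
    and meas: "{(X, A) \<in> space (Nn n d). P X A} \<in> sets (Nn n d)"
    and incl: "\<And>X A. X \<in> Good n d \<mu> \<delta> (vnorm d \<mu> - \<sigma>*t) (vnorm d \<mu> + \<sigma>*t) \<Longrightarrow> A \<in> space (Gs n) \<Longrightarrow> P X A"
  shows "measure (CSBM n d \<mu> \<sigma> p q) {(X, A) \<in> space (CSBM n d \<mu> \<sigma> p q). P X A} \<ge> 1 - n * (2*\<delta>/\<sigma> + 1/t\<^sup>2)"
proof -
  define \<eta> where "\<eta> = n * (2*\<delta>/\<sigma> + 1/t\<^sup>2)"
  define E where "E = {(X, A) \<in> space (Nn n d). P X A}"
  define G where "G = Good n d \<mu> \<delta> (vnorm d \<mu> - \<sigma>*t) (vnorm d \<mu> + \<sigma>*t)"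
  define U where "U = pmf_of_set ({..<n} \<rightarrow>\<^sub>E (UNIV :: bool set))"
  define K where "K = (\<lambda>\<epsilon>. csbm_features n d \<mu> \<sigma> \<epsilon> \<Otimes>\<^sub>M csbm_graph n p q \<epsilon>)"
  have CS: "CSBM n d \<mu> \<sigma> p q = measure_pmf U \<bind> K" unfolding CSBM_def U_def K_def ..
  interpret C: prob_space "CSBM n d \<mu> \<sigma> p q" by (rule CSBM_facts(1)[OF sig])
  have Es: "{(X, A) \<in> space (CSBM n d \<mu> \<sigma> p q). P X A} = E"
    unfolding E_def CSBM_facts(3)[OF sig] ..
  have Gs: "G \<in> sets (Fs n d)" unfolding G_def by (rule Good_sets)
  have GE: "G \<times> space (Gs n) \<subseteq> E"
    using incl sets.sets_into_space[OF Gs] unfolding E_def G_def Nn_def by (auto simp: space_pair_measure)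
  have pt: "emeasure (K \<epsilon>) E \<ge> ennreal (1 - \<eta>)" for \<epsilon>
  proof -
    interpret Gr: prob_space "csbm_graph n p q \<epsilon>" by (rule prob_graph)
    have sK: "sets (K \<epsilon>) = sets (Nn n d)" unfolding K_def Nn_def
      by (intro sets_pair_measure_cong sets_features sets_graph)
    have "emeasure (K \<epsilon>) (G \<times> space (Gs n)) = emeasure (csbm_features n d \<mu> \<sigma> \<epsilon>) G * emeasure (csbm_graph n p q \<epsilon>) (space (Gs n))"
      unfolding K_def
      by (rule Gr.emeasure_pair_measure_Times) (use Gs in \<open>simp_all add: sets_features sets_graph\<close>)
    also have "emeasure (csbm_graph n p q \<epsilon>) (space (Gs n)) = 1"
      using Gr.emeasure_space_1 by (simp add: space_graph)
    also have "emeasure (csbm_features n d \<mu> \<sigma> \<epsilon>) G = ennreal (measure (csbm_features n d \<mu> \<sigma> \<epsilon>) G)"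
    proof -
      interpret Fe: prob_space "csbm_features n d \<mu> \<sigma> \<epsilon>" using sig by (rule prob_features)
      show ?thesis by (rule Fe.emeasure_eq_measure)
    qed
    finally have e: "emeasure (K \<epsilon>) (G \<times> space (Gs n)) = ennreal (measure (csbm_features n d \<mu> \<sigma> \<epsilon>) G)" by simp
    have "measure (csbm_features n d \<mu> \<sigma> \<epsilon>) G \<ge> 1 - \<eta>"
      unfolding G_def \<eta>_def by (rule good_bound[OF sig nz del t])
    hence "ennreal (measure (csbm_features n d \<mu> \<sigma> \<epsilon>) G) \<ge> ennreal (1 - \<eta>)" by (rule ennreal_leI)
    hence "emeasure (K \<epsilon>) (G \<times> space (Gs n)) \<ge> ennreal (1 - \<eta>)" using e by simp
    also have "emeasure (K \<epsilon>) (G \<times> space (Gs n)) \<le> emeasure (K \<epsilon>) E"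
      by (rule emeasure_mono[OF GE]) (simp add: sK E_def meas)
    finally show ?thesis .
  qed
  have "emeasure (CSBM n d \<mu> \<sigma> p q) E = (\<integral>\<^sup>+\<epsilon>. emeasure (K \<epsilon>) E \<partial>measure_pmf U)"
    unfolding CS by (rule emeasure_bind[OF _ _ meas[folded E_def]]) (use kernel_in[OF sig, of n d \<mu> p q U] in \<open>simp_all add: K_def\<close>)
  also have "\<dots> \<ge> (\<integral>\<^sup>+\<epsilon>. ennreal (1 - \<eta>) \<partial>measure_pmf U)"
    by (intro nn_integral_mono pt)
  also have "(\<integral>\<^sup>+\<epsilon>. ennreal (1 - \<eta>) \<partial>measure_pmf U) = ennreal (1 - \<eta>)"
    by (simp add: measure_pmf.emeasure_space_1)
  finally have "emeasure (CSBM n d \<mu> \<sigma> p q) E \<ge> ennreal (1 - \<eta>)" .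
  hence "ennreal (measure (CSBM n d \<mu> \<sigma> p q) E) \<ge> ennreal (1 - \<eta>)" by (simp add: C.emeasure_eq_measure)
  hence "measure (CSBM n d \<mu> \<sigma> p q) E \<ge> 1 - \<eta>"
    by (cases "1 - \<eta> \<ge> 0") (auto simp: ennreal_le_iff)
  thus ?thesis unfolding Es \<eta>_def .
qed



lemma event_meas:
  fixes \<beta> R :: real and n d :: nat and \<mu> :: "nat \<Rightarrow> real"
  defines "P \<equiv> (\<lambda>X A. \<forall>i<n.
                (gat_out \<beta> R n d \<mu> X A i > 0 \<longleftrightarrow> inner_d d (w_tilde d \<mu>) (X i) > 0) \<and>
                (gat_out \<beta> R n d \<mu> X A i < 0 \<longleftrightarrow> inner_d d (w_tilde d \<mu>) (X i) < 0))"
  shows "{(X, A) \<in> space (Nn n d). P X A} \<in> sets (Nn n d)"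
proof -
  have PX: "{X \<in> space (Fs n d). P X A0} \<in> sets (Fs n d)" for A0
    unfolding P_def gat_out_eq by measurable
  have "{(X, A) \<in> space (Nn n d). P X A} = (\<Union>A0\<in>space (Gs n). {X \<in> space (Fs n d). P X A0} \<times> {A0})"
    unfolding Nn_def space_pair_measure by auto
  also have "\<dots> \<in> sets (Nn n d)" unfolding Nn_def
    by (intro sets.finite_UN finite_space_Gs pair_measureI PX singleton_Gs)
  finally show ?thesis .
qed



lemma ratio:
  fixes x y m \<sigma> t \<delta> :: real
  assumes "\<delta> \<le> x" "m - \<sigma>*t \<le> x" "y \<le> m + \<sigma>*t" "0 < \<delta>" "\<delta> \<le> \<sigma>*t" "0 \<le> m"
  shows "y \<le> (3*\<sigma>*t/\<delta>) * x"
proof (cases "m \<ge> 2*\<sigma>*t")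
  case True
  have "y \<le> 3 * x" using assms True by linarith
  also have "3 * x \<le> (3*\<sigma>*t/\<delta>) * x"
  proof (rule mult_right_mono)
    show "3 \<le> 3*\<sigma>*t/\<delta>" using assms by (simp add: field_simps)
  qed (use assms in linarith)
  finally show ?thesis .
next
  case False
  have "y \<le> 3*\<sigma>*t" using assms False by linarith
  also have "3*\<sigma>*t = (3*\<sigma>*t/\<delta>) * \<delta>" using assms by simp
  also have "\<dots> \<le> (3*\<sigma>*t/\<delta>) * x" using assms by (intro mult_left_mono) auto
  finally show ?thesis .
qed

lemma growth:
  fixes \<kappa> L :: real and n :: nat
  assumes k: "\<kappa> > 0" and n: "n \<ge> 3" and L: "ln (real n) \<ge> (6/\<kappa>)\<^sup>2"
  shows "\<kappa> * (sqrt (ln n))^3 \<ge> 1 \<and> exp (\<kappa> * (sqrt (ln n))^3) > real n * (3 * real n^2 * sqrt (ln n))"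
proof -
  define L where "L = ln (real n)"
  define s where "s = sqrt L"
  have L1: "L \<ge> 1"
  proof -
    have "exp 1 \<le> (3::real)" using exp_le by simp
    also have "\<dots> \<le> real n" using n by simp
    finally show ?thesis unfolding L_def using n by (subst ln_ge_iff) auto
  qed
  have s1: "s \<ge> 1" unfolding s_def using L1 by simp
  have sL: "s\<^sup>2 = L" unfolding s_def using L1 by simp
  have sleL: "s \<le> L"
  proof -
    have "s * 1 \<le> s * s" using s1 by (intro mult_left_mono) auto
    thus ?thesis using sL by (simp add: power2_eq_square)
  qed
  have ks: "\<kappa> * s \<ge> 6"
  proof -
    have "(6/\<kappa>)\<^sup>2 \<le> s\<^sup>2" using L sL unfolding L_def by simp
    hence "6/\<kappa> \<le> s" using s1 by (smt (verit) power_mono_iff zero_less_numeral zero_less_power2 pos2 power2_le_imp_le)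
    thus ?thesis using k by (simp add: field_simps)
  qed
  have k3: "\<kappa> * s^3 = (\<kappa> * s) * L" using sL by (simp add: power2_eq_square power3_eq_cube)
  have big: "\<kappa> * s^3 \<ge> 6 * L" unfolding k3 using ks L1 by (intro mult_right_mono) auto
  have np: "real n > 0" using n by simp
  have "real n * (3 * real n^2 * s) = 3 * s * real n ^ 3" by (simp add: power2_eq_square power3_eq_cube)
  also have "\<dots> = 3 * s * exp (3 * L)" 
  proof -
    have "exp (3*L) = exp L ^ 3" using exp_of_nat_mult[of 3 L] by simp
    also have "exp L = real n" unfolding L_def using np by simp
    finally show ?thesis by simp
  qed
  also have "\<dots> < exp 2 * exp L * exp (3*L)"
  proof -
    have e2: "3 \<le> exp (2::real)" using exp_ge_add_one_self[of 2] by simp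
    have sl: "s < exp L" using sleL exp_ge_add_one_self[of L] by linarith
    have "3 * s < 3 * exp L" using sl by simp
    also have "\<dots> \<le> exp 2 * exp L" using e2 by (intro mult_right_mono) auto
    finally have "3 * s < exp 2 * exp L" .
    thus ?thesis by simp
  qed
  also have "\<dots> = exp (2 + L + 3*L)" by (simp only: exp_add)
  also have "\<dots> \<le> exp (\<kappa> * s^3)" using big L1 by simp
  finally have A: "exp (\<kappa> * s^3) > real n * (3 * real n^2 * s)" .
  have "\<kappa> * s^3 \<ge> 1" using big L1 by linarith
  thus ?thesis using A unfolding s_def L_def by simp
qed



lemma key:
  fixes d n :: nat and \<mu> :: "nat \<Rightarrow> real" and \<sigma> p q R \<beta> c :: real
  assumes beta: "0 \<le> \<beta>" "\<beta> < 1" and nz: "\<exists>k<d. \<mu> k \<noteq> 0" and sig: "\<sigma> > 0" and c: "c > 0"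
    and n: "n \<ge> 3" and Lb: "ln (real n) \<ge> (6/(2*(1-\<beta>)*c))\<^sup>2"
    and R: "R \<ge> c * (real n * (ln (real n))\<^sup>2 / \<sigma>)"
  shows "measure (CSBM n d \<mu> \<sigma> p q)
            {(X, A) \<in> space (CSBM n d \<mu> \<sigma> p q).
              \<forall>i < n.
                (gat_out \<beta> R n d \<mu> X A i > 0 \<longleftrightarrow> inner_d d (w_tilde d \<mu>) (X i) > 0) \<and>
                (gat_out \<beta> R n d \<mu> X A i < 0 \<longleftrightarrow> inner_d d (w_tilde d \<mu>) (X i) < 0)}
         \<ge> 1 - (2 / sqrt (ln (real n)) + 1 / real n)"
proof -
  define \<kappa> where "\<kappa> = 2*(1-\<beta>)*c"
  have kpos: "\<kappa> > 0" unfolding \<kappa>_def using beta c by simp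
  define L where "L = ln (real n)"
  define s where "s = sqrt L"
  define t where "t = real n"
  define \<delta> where "\<delta> = \<sigma> / (real n * s)"
  define m where "m = vnorm d \<mu>"
  define C where "C = 3*\<sigma>*t/\<delta>"
  have np: "real n \<ge> 3" using n by simp
  have L1: "L \<ge> 1"
  proof -
    have "exp 1 \<le> (3::real)" using exp_le by simp
    also have "\<dots> \<le> real n" using n by simp
    finally show ?thesis unfolding L_def using n by (subst ln_ge_iff) auto
  qed
  have s1: "s \<ge> 1" unfolding s_def using L1 by simp
  have sL: "s\<^sup>2 = L" unfolding s_def using L1 by simp
  have gr: "\<kappa> * s^3 \<ge> 1 \<and> exp (\<kappa> * s^3) > real n * (3 * real n^2 * s)"
    unfolding s_def L_def by (rule growth[OF kpos n Lb[folded \<kappa>_def]])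
  have del: "\<delta> > 0" unfolding \<delta>_def using sig s1 np by simp
  have tp: "t > 0" unfolding t_def using np by simp
  have Ceq: "C = 3 * real n^2 * s" unfolding C_def \<delta>_def t_def using sig s1 np by (simp add: field_simps power2_eq_square)
  have C1: "C \<ge> 1" unfolding Ceq using s1 np by (smt (verit) mult_less_cancel_right2 of_nat_0_le_iff one_le_power)
  have m0: "m \<ge> 0" unfolding m_def vnorm_def by (simp add: sum_nonneg)
  have dst: "\<delta> \<le> \<sigma> * t"
  proof -
    have ns: "1 \<le> real n * s" using mult_mono[of 1 "real n" 1 s] s1 np by simp
    have "\<sigma> / (real n * s) \<le> \<sigma> / 1" using ns sig by (intro divide_left_mono) auto
    hence "\<delta> \<le> \<sigma>" unfolding \<delta>_def by simp
    also have "\<sigma> \<le> \<sigma> * t" unfolding t_def using sig np by simp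
    finally show ?thesis .
  qed
  have Rpos: "R > 0"
  proof -
    have "0 < c * (real n * (ln (real n))\<^sup>2 / \<sigma>)" using c np sig L1 unfolding L_def by simp
    thus ?thesis using R by linarith
  qed
  have K: "2*(R*(1-\<beta>))*\<delta> \<ge> \<kappa> * s^3"
  proof -
    have "\<kappa> * s^3 = 2 * (c * (real n * L\<^sup>2 / \<sigma>)) * (1-\<beta>) * \<delta>"
      unfolding \<kappa>_def \<delta>_def sL[symmetric] using sig s1 np by (simp add: field_simps power2_eq_square power3_eq_cube)
    also have "\<dots> \<le> 2 * R * (1-\<beta>) * \<delta>"
      using R beta del unfolding L_def by (intro mult_right_mono) auto
    finally show ?thesis by simp
  qed
  have K1: "2*(R*(1-\<beta>))*\<delta> \<ge> 1" using K gr by linarith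
  have K2: "exp (2*(R*(1-\<beta>))*\<delta>) > real n * C"
  proof -
    have "real n * C < exp (\<kappa> * s^3)" using gr Ceq by simp
    also have "\<dots> \<le> exp (2*(R*(1-\<beta>))*\<delta>)" using K by simp
    finally show ?thesis .
  qed
  define P where "P = (\<lambda>X A. \<forall>i<n.
                (gat_out \<beta> R n d \<mu> X A i > 0 \<longleftrightarrow> inner_d d (w_tilde d \<mu>) (X i) > 0) \<and>
                (gat_out \<beta> R n d \<mu> X A i < 0 \<longleftrightarrow> inner_d d (w_tilde d \<mu>) (X i) < 0))"
  have "measure (CSBM n d \<mu> \<sigma> p q) {(X, A) \<in> space (CSBM n d \<mu> \<sigma> p q). P X A} \<ge> 1 - n * (2*\<delta>/\<sigma> + 1/t\<^sup>2)"
  proof (rule csbm_lower[OF sig nz del tp])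
    show "{(X, A) \<in> space (Nn n d). P X A} \<in> sets (Nn n d)" unfolding P_def by (rule event_meas)
  next
    fix X A assume X: "X \<in> Good n d \<mu> \<delta> (vnorm d \<mu> - \<sigma>*t) (vnorm d \<mu> + \<sigma>*t)"
    define a where "a = (\<lambda>j. inner_d d (w_tilde d \<mu>) (X j))"
    have G: "\<forall>j<n. \<delta> \<le> \<bar>a j\<bar> \<and> m - \<sigma>*t \<le> \<bar>a j\<bar> \<and> \<bar>a j\<bar> \<le> m + \<sigma>*t"
      using X unfolding Good_def a_def m_def by auto
    have Gd: "\<forall>j<n. \<delta> \<le> \<bar>a j\<bar>" using G by auto
    have GC: "\<forall>i<n. \<forall>j<n. \<bar>a j\<bar> \<le> C * \<bar>a i\<bar>"
    proof (intro allI impI)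
      fix i j assume i: "i < n" and j: "j < n"
      show "\<bar>a j\<bar> \<le> C * \<bar>a i\<bar>" unfolding C_def
        by (rule ratio) (use G i j del dst m0 in auto)
    qed
    show "P X A" unfolding P_def
    proof (intro allI impI)
      fix i assume i: "i < n"
      have sgn: "(a i > 0 \<longrightarrow> gat_out \<beta> R n d \<mu> X A i > 0) \<and> (a i < 0 \<longrightarrow> gat_out \<beta> R n d \<mu> X A i < 0)"
        unfolding a_def by (rule gat_sign[OF i Rpos beta(2) del _ _ C1 K1 K2]) (use Gd GC in \<open>simp_all add: a_def\<close>)
      have "a i \<noteq> 0" using Gd i del by force
      thus "(gat_out \<beta> R n d \<mu> X A i > 0 \<longleftrightarrow> inner_d d (w_tilde d \<mu>) (X i) > 0) \<and>
                (gat_out \<beta> R n d \<mu> X A i < 0 \<longleftrightarrow> inner_d d (w_tilde d \<mu>) (X i) < 0)"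
        using sgn unfolding a_def by auto
    qed
  qed
  moreover have "real n * (2*\<delta>/\<sigma> + 1/t\<^sup>2) = 2 / sqrt (ln (real n)) + 1 / real n"
    unfolding \<delta>_def t_def s_def[symmetric] L_def[symmetric] using sig s1 np
    by (simp add: field_simps power2_eq_square)
  ultimately show ?thesis unfolding P_def by simp
qed



theorem theorem13:
  fixes d :: "nat \<Rightarrow> nat" and \<mu> :: "nat \<Rightarrow> nat \<Rightarrow> real"
    and \<sigma> p q R :: "nat \<Rightarrow> real" and \<beta> :: real
  assumes beta: "0 \<le> \<beta>" "\<beta> < 1"
    and mu_nz: "\<And>n. \<exists>k < d n. \<mu> n k \<noteq> 0"
    and sigma_pos: "\<And>n. \<sigma> n > 0"
    and p_prob: "\<And>n. 0 \<le> p n \<and> p n \<le> 1"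
    and q_prob: "\<And>n. 0 \<le> q n \<and> q n \<le> 1"
    and R_large: "\<exists>c > 0. eventually (\<lambda>n. R n \<ge> c * (real n * (ln (real n))\<^sup>2 / \<sigma> n)) sequentially"
  shows "(\<lambda>n. measure (CSBM n (d n) (\<mu> n) (\<sigma> n) (p n) (q n))
            {(X, A) \<in> space (CSBM n (d n) (\<mu> n) (\<sigma> n) (p n) (q n)).
              \<forall>i < n.
                (gat_out \<beta> (R n) n (d n) (\<mu> n) X A i > 0
                   \<longleftrightarrow> inner_d (d n) (w_tilde (d n) (\<mu> n)) (X i) > 0) \<and>
                (gat_out \<beta> (R n) n (d n) (\<mu> n) X A i < 0
                   \<longleftrightarrow> inner_d (d n) (w_tilde (d n) (\<mu> n)) (X i) < 0)})
         \<longlonglongrightarrow> 1"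
proof -
  obtain c where c: "c > 0" and Rev: "eventually (\<lambda>n. R n \<ge> c * (real n * (ln (real n))\<^sup>2 / \<sigma> n)) sequentially"
    using R_large by blast
  define E where "E = (\<lambda>n. measure (CSBM n (d n) (\<mu> n) (\<sigma> n) (p n) (q n))
            {(X, A) \<in> space (CSBM n (d n) (\<mu> n) (\<sigma> n) (p n) (q n)).
              \<forall>i < n.
                (gat_out \<beta> (R n) n (d n) (\<mu> n) X A i > 0
                   \<longleftrightarrow> inner_d (d n) (w_tilde (d n) (\<mu> n)) (X i) > 0) \<and>
                (gat_out \<beta> (R n) n (d n) (\<mu> n) X A i < 0
                   \<longleftrightarrow> inner_d (d n) (w_tilde (d n) (\<mu> n)) (X i) < 0)})"
  have lnlim: "filterlim (\<lambda>n::nat. ln (real n)) at_top sequentially" by real_asymp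
  have ev_ln: "eventually (\<lambda>n. ln (real n) \<ge> (6/(2*(1-\<beta>)*c))\<^sup>2) sequentially"
    using lnlim by (simp add: filterlim_at_top)
  have ev3: "eventually (\<lambda>n::nat. n \<ge> 3) sequentially" by (rule eventually_ge_at_top)
  have low: "eventually (\<lambda>n. 1 - (2 / sqrt (ln (real n)) + 1 / real n) \<le> E n) sequentially"
    using Rev ev_ln ev3
  proof eventually_elim
    case (elim n)
    show ?case unfolding E_def
      by (rule key[OF beta mu_nz sigma_pos c elim(3) elim(2) elim(1)])
  qed
  have up: "eventually (\<lambda>n. E n \<le> 1) sequentially"
  proof (rule always_eventually, rule allI)
    fix n
    interpret prob_space "CSBM n (d n) (\<mu> n) (\<sigma> n) (p n) (q n)" by (rule CSBM_facts(1)[OF sigma_pos])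
    show "E n \<le> 1" unfolding E_def by (rule prob_le_1)
  qed
  have lim: "(\<lambda>n::nat. 1 - (2 / sqrt (ln (real n)) + 1 / real n)) \<longlonglongrightarrow> 1" by real_asymp
  have "E \<longlonglongrightarrow> 1" by (rule tendsto_sandwich[OF low up lim tendsto_const])
  thus ?thesis unfolding E_def .
qed

end
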